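(* Let $\alpha\in(0,1/2]$. Let $p_1,\dots,p_m$ be real numbers with $p_j\ge\alpha$ for all $j$ and $\sum_j p_j=1$, and let $c_1,\dots,c_m\in\mathbb{R}$ satisfy $\sum_j p_jc_j=0$. Then \[ \sum_j p_j\,e^{c_j-\frac{c_j^2}{4\alpha}}\le 1. \] *)

theory Defs
  imports Complex_Main
begin

end

theory Submission
  imports Defs
begin

definition gg :: "real \<Rightarrow> real \<Rightarrow> real" where
  "gg a c = exp (c - c^2/(4*a))"

lemma gg_le: assumes "0 < a" shows "gg a c \<le> exp a"
proof -
  have "c - c^2/(4*a) \<le> a"
  proof -
    have "0 \<le> (c - 2*a)^2" by simp
    hence "4*a*c - c^2 \<le> 4*a*a" by (simp add: power2_eq_square algebra_simps)
    thus ?thesis using assms by (simp add: field_simps)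
  qed
  thus ?thesis unfolding gg_def by simp
qed

lemma gg_2a: assumes "0 < a" shows "gg a (2*a) = exp a"
  using assms unfolding gg_def by (simp add: power2_eq_square field_simps)

lemma gg_0: "gg a 0 = 1" unfolding gg_def by simp

lemma gg_deriv: assumes "0 < a"
  shows "DERIV (gg a) x :> (1 - x/(2*a)) * gg a x"
proof -
  have "DERIV (\<lambda>c. c - c^2/(4*a)) x :> 1 - 2*x/(4*a)"
    using assms by (auto intro!: derivative_eq_intros simp: field_simps)
  hence "DERIV (\<lambda>c. exp (c - c^2/(4*a))) x :> exp (x - x^2/(4*a)) * (1 - 2*x/(4*a))"
    by (rule DERIV_chain2[OF DERIV_exp])
  moreover have "1 - 2*x/(4*a) = 1 - x/(2*a)" using assms by (simp add: field_simps)
  ultimately show ?thesis unfolding gg_def[abs_def] using assms by (simp add: mult.commute)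
qed

lemma gg_deriv2: assumes "0 < a"
  shows "DERIV (\<lambda>c. (1 - c/(2*a)) * gg a c) x :> ((1 - x/(2*a))^2 - 1/(2*a)) * gg a x"
proof -
  have d1: "DERIV (\<lambda>c. 1 - c/(2*a)) x :> - 1/(2*a)"
    using assms by (auto intro!: derivative_eq_intros)
  note h = DERIV_mult[OF d1 gg_deriv[OF assms]]
  show ?thesis
    by (rule DERIV_cong[OF h]) (use assms in \<open>simp add: power2_eq_square field_simps\<close>)
qed

lemma gg'_decr: assumes "0 < a" "a \<le> 1/2" "0 \<le> x" "x \<le> y" "y \<le> 2*a"
  shows "(1 - y/(2*a)) * gg a y \<le> (1 - x/(2*a)) * gg a x"
proof -
  have "\<forall>t. x \<le> t \<and> t \<le> y \<longrightarrow> ((1 - t/(2*a))^2 - 1/(2*a)) * gg a t \<le> 0"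
  proof (intro allI impI)
    fix t assume t: "x \<le> t \<and> t \<le> y"
    have "0 \<le> 1 - t/(2*a)" "1 - t/(2*a) \<le> 1" using t assms by (auto simp: field_simps)
    hence "(1 - t/(2*a))^2 \<le> 1" by (simp add: power_le_one)
    moreover have "1 \<le> 1/(2*a)" using assms by (simp add: field_simps)
    moreover have "0 \<le> gg a t" unfolding gg_def by simp
    ultimately show "((1 - t/(2*a))^2 - 1/(2*a)) * gg a t \<le> 0"
      by (intro mult_nonpos_nonneg) auto
  qed
  thus ?thesis
    using DERIV_nonpos_imp_nonincreasing[of x y "\<lambda>c. (1 - c/(2*a)) * gg a c"] gg_deriv2[OF assms(1)] assms
    by blast
qed

lemma gg_tan: assumes "0 < a" "a \<le> 1/2" "0 \<le> x" "x \<le> 2*a" "0 \<le> c" "c \<le> 2*a"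
  shows "gg a c \<le> gg a x + (1 - x/(2*a)) * gg a x * (c - x)"
proof -
  define Dx where "Dx = (1 - x/(2*a)) * gg a x"
  have "gg a c \<le> gg a x + Dx * (c - x)"
  proof (cases "x < c")
    case True
    then obtain z where z: "x < z" "z < c" "gg a c - gg a x = (c - x) * ((1 - z/(2*a)) * gg a z)"
      using MVT2[of x c "gg a" "\<lambda>t. (1 - t/(2*a)) * gg a t"] gg_deriv[OF assms(1)] by blast
    have "(1 - z/(2*a)) * gg a z \<le> Dx"
      using gg'_decr[of a x z] assms z unfolding Dx_def by auto
    hence "(c - x) * ((1 - z/(2*a)) * gg a z) \<le> (c - x) * Dx"
      using True by (intro mult_left_mono) auto
    moreover have "(c - x) * Dx = Dx * (c - x)" by simp
    ultimately show ?thesis using z by linarith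
  next
    case False
    show ?thesis
    proof (cases "c = x")
      case True thus ?thesis by simp
    next
      case False
      hence cx: "c < x" using \<open>\<not> x < c\<close> by simp
      then obtain z where z: "c < z" "z < x" "gg a x - gg a c = (x - c) * ((1 - z/(2*a)) * gg a z)"
        using MVT2[of c x "gg a" "\<lambda>t. (1 - t/(2*a)) * gg a t"] gg_deriv[OF assms(1)] by blast
      have "Dx \<le> (1 - z/(2*a)) * gg a z"
        using gg'_decr[of a z x] assms z unfolding Dx_def by auto
      hence "(x - c) * Dx \<le> (x - c) * ((1 - z/(2*a)) * gg a z)"
        using cx by (intro mult_left_mono) auto
      moreover have "(x - c) * Dx = - (Dx * (c - x))" by (simp add: algebra_simps)
      ultimately show ?thesis using z by linarith
    qed
  qed
  thus ?thesis unfolding Dx_def .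
qed

lemma exp_up58: fixes x :: real assumes "0 \<le> x" "x \<le> 3/8" shows "exp x \<le> 1 + x + 5/8 * x^2"
proof -
  obtain t where t: "\<bar>t\<bar> \<le> \<bar>x\<bar>" "exp x = (\<Sum>m<3. (x ^ m) / fact m) + (exp t / fact 3) * x ^ 3"
    using Maclaurin_exp_le[of x 3] by blast
  have "exp t \<le> exp (1/2)" using t(1) assms by simp
  also have "\<dots> \<le> 2" by (rule exp_half_le2)
  finally have et: "exp t \<le> 2" .
  have s: "(\<Sum>m<3. (x ^ m) / fact m) = 1 + x + x^2/2"
    by (simp add: numeral_3_eq_3 power2_eq_square)
  have "(exp t / fact 3) * x ^ 3 \<le> (2 / 6) * x^3"
    using et assms by (intro mult_right_mono) (auto simp: fact_numeral)
  also have "\<dots> \<le> (1/8) * x^2"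
  proof -
    have "x * x^2 \<le> (3/8) * x^2" using assms by (intro mult_right_mono) auto
    hence "x^3 \<le> (3/8) * x^2" by (simp add: power3_eq_cube power2_eq_square)
    thus ?thesis by simp
  qed
  finally show ?thesis using t(2) s by simp
qed

lemma exp_neg_up: fixes z :: real assumes "0 \<le> z" shows "exp (- z) \<le> 1 / (1 + z + z^2/2)"
proof -
  have "1 + z + z^2/2 \<le> exp z" by (rule exp_lower_Taylor_quadratic[OF assms])
  moreover have "0 < 1 + z + z^2/2" using assms by (simp add: add_pos_nonneg)
  ultimately show ?thesis by (simp add: exp_minus field_simps)
qed

lemma poly_small: fixes a r :: real assumes "0 \<le> a" "a \<le> 3/8" "0 \<le> r" "r \<le> 1"
  shows "0 \<le> r^2 - 2*r^3 + r^4 + 2*a - 9*a*r^2 + 12*a*r^3 - (13/2)*a*r^4 + (5/2)*a*r^5 - (5/8)*a*r^6 - 4*a^2 - 4*a^2*r + 22*a^2*r^2 - 29*a^2*r^3 + (99/4)*a^2*r^4 - (25/2)*a^2*r^5 + (5/2)*a^2*r^6 - a^3 + 7*a^3*r - (89/4)*a^3*r^2 + (95/2)*a^3*r^3 - 49*a^3*r^4 + (45/2)*a^3*r^5 - (15/4)*a^3*r^6 + 2*a^4*r + 17*a^4*r^2 - (97/2)*a^4*r^3 + (179/4)*a^4*r^4 - (35/2)*a^4*r^5 + (5/2)*a^4*r^6 - 10*a^5*r^2 + 20*a^5*r^3 - 15*a^5*r^4 + 5*a^5*r^5 - (5/8)*a^5*r^6"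
proof -
  define s where "s = 8*a/3"
  have s0: "0 \<le> s" "s \<le> 1" unfolding s_def using assms by auto
  have as: "a = 3*s/8" unfolding s_def by simp
  have "r^2 - 2*r^3 + r^4 + 2*a - 9*a*r^2 + 12*a*r^3 - (13/2)*a*r^4 + (5/2)*a*r^5 - (5/8)*a*r^6 - 4*a^2 - 4*a^2*r + 22*a^2*r^2 - 29*a^2*r^3 + (99/4)*a^2*r^4 - (25/2)*a^2*r^5 + (5/2)*a^2*r^6 - a^3 + 7*a^3*r - (89/4)*a^3*r^2 + (95/2)*a^3*r^3 - 49*a^3*r^4 + (45/2)*a^3*r^5 - (15/4)*a^3*r^6 + 2*a^4*r + 17*a^4*r^2 - (97/2)*a^4*r^3 + (179/4)*a^4*r^4 - (35/2)*a^4*r^5 + (5/2)*a^4*r^6 - 10*a^5*r^2 + 20*a^5*r^3 - 15*a^5*r^4 + 5*a^5*r^5 - (5/8)*a^5*r^6 = 1*(1-s)^6*r^2*(1-r)^5 + 3*(1-s)^6*r^3*(1-r)^4 + 3*(1-s)^6*r^4*(1-r)^3 + 1*(1-s)^6*r^5*(1-r)^2 + (3/4)*s^1*(1-s)^5*(1-r)^7 + (21/4)*s^1*(1-s)^5*r^1*(1-r)^6 + (147/8)*s^1*(1-s)^5*r^2*(1-r)^5 + (255/8)*s^1*(1-s)^5*r^3*(1-r)^4 + (417/16)*s^1*(1-s)^5*r^4*(1-r)^3 + (69/8)*s^1*(1-s)^5*r^5*(1-r)^2 + (45/64)*s^1*(1-s)^5*r^6*(1-r)^1 + (9/64)*s^1*(1-s)^5*r^7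 + (51/16)*s^2*(1-s)^4*(1-r)^7 + (87/4)*s^2*(1-s)^4*r^1*(1-r)^6 + (2073/32)*s^2*(1-s)^4*r^2*(1-r)^5 + (6249/64)*s^2*(1-s)^4*r^3*(1-r)^4 + (18555/256)*s^2*(1-s)^4*r^4*(1-r)^3 + (5895/256)*s^2*(1-s)^4*r^5*(1-r)^2 + (675/256)*s^2*(1-s)^4*r^6*(1-r)^1 + (171/256)*s^2*(1-s)^4*r^7 + (2661/512)*s^3*(1-s)^3*(1-r)^7 + (69/2)*s^3*(1-s)^3*r^1*(1-r)^6 + (195193/2048)*s^3*(1-s)^3*r^2*(1-r)^5 + (270627/2048)*s^3*(1-s)^3*r^3*(1-r)^4 + (92709/1024)*s^3*(1-s)^3*r^4*(1-r)^3 + (6917/256)*s^3*(1-s)^3*r^5*(1-r)^2 + (63/16)*s^3*(1-s)^3*r^6*(1-r)^1 + (675/512)*s^3*(1-s)^3*r^7 + (2031/512)*s^4*(1-s)^2*(1-r)^7 + (52305/2048)*s^4*(1-s)^2*r^1*(1-r)^6 + (272643/4096)*s^4*(1-s)^2*r^2*(1-r)^5 + (701625/8192)*s^4*(1-s)^2*r^3*(1-r)^4 + (877395/16384)*s^4*(1-s)^2*r^4*(1-r)^3 + (240087/16384)*s^4*(1-s)^2*r^5*(1-r)^2 + (51075/16384)*s^4*(1-s)^2*r^6*(1-r)^1 + (22257/16384)*s^4*(1-s)^2*r^7 + (687/512)*s^5*(1-s)^1*(1-r)^7 + (8529/1024)*s^5*(1-s)^1*r^1*(1-r)^6 + (333825/16384)*s^5*(1-s)^1*r^2*(1-r)^5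 + (390495/16384)*s^5*(1-s)^1*r^3*(1-r)^4 + (420915/32768)*s^5*(1-s)^1*r^4*(1-r)^3 + (3159/1024)*s^5*(1-s)^1*r^5*(1-r)^2 + (370089/262144)*s^5*(1-s)^1*r^6*(1-r)^1 + (190305/262144)*s^5*(1-s)^1*r^7 + (69/512)*s^6*(1-r)^7 + (1617/2048)*s^6*r^1*(1-r)^6 + (28093/16384)*s^6*r^2*(1-r)^5 + (25605/16384)*s^6*r^3*(1-r)^4 + (13485/32768)*s^6*r^4*(1-r)^3 + (793/16384)*s^6*r^5*(1-r)^2 + (78201/262144)*s^6*r^6*(1-r)^1 + (41553/262144)*s^6*r^7"
    unfolding as by algebra
  moreover have "0 \<le> 1*(1-s)^6*r^2*(1-r)^5 + 3*(1-s)^6*r^3*(1-r)^4 + 3*(1-s)^6*r^4*(1-r)^3 + 1*(1-s)^6*r^5*(1-r)^2 + (3/4)*s^1*(1-s)^5*(1-r)^7 + (21/4)*s^1*(1-s)^5*r^1*(1-r)^6 + (147/8)*s^1*(1-s)^5*r^2*(1-r)^5 + (255/8)*s^1*(1-s)^5*r^3*(1-r)^4 + (417/16)*s^1*(1-s)^5*r^4*(1-r)^3 + (69/8)*s^1*(1-s)^5*r^5*(1-r)^2 + (45/64)*s^1*(1-s)^5*r^6*(1-r)^1 + (9/64)*s^1*(1-s)^5*r^7 + (51/16)*s^2*(1-s)^4*(1-r)^7 + (87/4)*s^2*(1-s)^4*r^1*(1-r)^6 + (2073/32)*s^2*(1-s)^4*r^2*(1-r)^5 + (6249/64)*s^2*(1-s)^4*r^3*(1-r)^4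 + (18555/256)*s^2*(1-s)^4*r^4*(1-r)^3 + (5895/256)*s^2*(1-s)^4*r^5*(1-r)^2 + (675/256)*s^2*(1-s)^4*r^6*(1-r)^1 + (171/256)*s^2*(1-s)^4*r^7 + (2661/512)*s^3*(1-s)^3*(1-r)^7 + (69/2)*s^3*(1-s)^3*r^1*(1-r)^6 + (195193/2048)*s^3*(1-s)^3*r^2*(1-r)^5 + (270627/2048)*s^3*(1-s)^3*r^3*(1-r)^4 + (92709/1024)*s^3*(1-s)^3*r^4*(1-r)^3 + (6917/256)*s^3*(1-s)^3*r^5*(1-r)^2 + (63/16)*s^3*(1-s)^3*r^6*(1-r)^1 + (675/512)*s^3*(1-s)^3*r^7 + (2031/512)*s^4*(1-s)^2*(1-r)^7 + (52305/2048)*s^4*(1-s)^2*r^1*(1-r)^6 + (272643/4096)*s^4*(1-s)^2*r^2*(1-r)^5 + (701625/8192)*s^4*(1-s)^2*r^3*(1-r)^4 + (877395/16384)*s^4*(1-s)^2*r^4*(1-r)^3 + (240087/16384)*s^4*(1-s)^2*r^5*(1-r)^2 + (51075/16384)*s^4*(1-s)^2*r^6*(1-r)^1 + (22257/16384)*s^4*(1-s)^2*r^7 + (687/512)*s^5*(1-s)^1*(1-r)^7 + (8529/1024)*s^5*(1-s)^1*r^1*(1-r)^6 + (333825/16384)*s^5*(1-s)^1*r^2*(1-r)^5 + (390495/16384)*s^5*(1-s)^1*r^3*(1-r)^4 + (420915/32768)*s^5*(1-s)^1*r^4*(1-r)^3 + (3159/1024)*s^5*(1-s)^1*r^5*(1-r)^2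 + (370089/262144)*s^5*(1-s)^1*r^6*(1-r)^1 + (190305/262144)*s^5*(1-s)^1*r^7 + (69/512)*s^6*(1-r)^7 + (1617/2048)*s^6*r^1*(1-r)^6 + (28093/16384)*s^6*r^2*(1-r)^5 + (25605/16384)*s^6*r^3*(1-r)^4 + (13485/32768)*s^6*r^4*(1-r)^3 + (793/16384)*s^6*r^5*(1-r)^2 + (78201/262144)*s^6*r^6*(1-r)^1 + (41553/262144)*s^6*r^7"
    using s0 assms by (intro add_nonneg_nonneg mult_nonneg_nonneg zero_le_power) auto
  ultimately show ?thesis by simp
qed
lemma core_small: fixes a r :: real assumes "0 < a" "a \<le> 3/8" "0 \<le> r" "r \<le> 1"
  shows "a * exp (- ((1-a)*r*((1-a)*r + 2*a)/a)) + (1-a) * exp (a*r*(2-r)) \<le> 1"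
proof -
  define w where "w = (1-a)*r*((1-a)*r + 2*a)"
  define x where "x = a*r*(2-r)"
  define Den where "Den = 2*a^2 + 2*a*w + w^2"
  define Y where "Y = 1 - (1-a)*(1 + x + 5/8*x^2)"
  have w0: "0 \<le> w" unfolding w_def using assms by auto
  have x0: "0 \<le> x" unfolding x_def using assms by auto
  have "r*(2-r) \<le> 1" proof - have "0 \<le> (r-1)^2" by simp thus ?thesis by (simp add: power2_eq_square algebra_simps) qed
  hence "x \<le> a" unfolding x_def using assms by (simp add: mult_left_le)
  hence x1: "x \<le> 3/8" using assms by simp
  have Den0: "0 < Den" unfolding Den_def using assms w0 by (simp add: add_pos_nonneg)
  have e1: "exp x \<le> 1 + x + 5/8*x^2" by (rule exp_up58[OF x0 x1])
  have e2: "exp (- (w/a)) \<le> 1 / (1 + w/a + (w/a)^2/2)" by (rule exp_neg_up) (use w0 assms in simp)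
  have "1 + w/a + (w/a)^2/2 = Den/(2*a^2)" unfolding Den_def using assms
    by (simp add: field_simps power2_eq_square)
  hence e2': "1 / (1 + w/a + (w/a)^2/2) = 2*a^2 / Den" by simp
  have iden: "Y * Den - 2*a^3 = a*(1-a)*r^2 * (r^2 - 2*r^3 + r^4 + 2*a - 9*a*r^2 + 12*a*r^3 - (13/2)*a*r^4 + (5/2)*a*r^5 - (5/8)*a*r^6 - 4*a^2 - 4*a^2*r + 22*a^2*r^2 - 29*a^2*r^3 + (99/4)*a^2*r^4 - (25/2)*a^2*r^5 + (5/2)*a^2*r^6 - a^3 + 7*a^3*r - (89/4)*a^3*r^2 + (95/2)*a^3*r^3 - 49*a^3*r^4 + (45/2)*a^3*r^5 - (15/4)*a^3*r^6 + 2*a^4*r + 17*a^4*r^2 - (97/2)*a^4*r^3 + (179/4)*a^4*r^4 - (35/2)*a^4*r^5 + (5/2)*a^4*r^6 - 10*a^5*r^2 + 20*a^5*r^3 - 15*a^5*r^4 + 5*a^5*r^5 - (5/8)*a^5*r^6)"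
    unfolding Y_def Den_def w_def x_def by algebra
  have "0 \<le> a*(1-a)*r^2 * (r^2 - 2*r^3 + r^4 + 2*a - 9*a*r^2 + 12*a*r^3 - (13/2)*a*r^4 + (5/2)*a*r^5 - (5/8)*a*r^6 - 4*a^2 - 4*a^2*r + 22*a^2*r^2 - 29*a^2*r^3 + (99/4)*a^2*r^4 - (25/2)*a^2*r^5 + (5/2)*a^2*r^6 - a^3 + 7*a^3*r - (89/4)*a^3*r^2 + (95/2)*a^3*r^3 - 49*a^3*r^4 + (45/2)*a^3*r^5 - (15/4)*a^3*r^6 + 2*a^4*r + 17*a^4*r^2 - (97/2)*a^4*r^3 + (179/4)*a^4*r^4 - (35/2)*a^4*r^5 + (5/2)*a^4*r^6 - 10*a^5*r^2 + 20*a^5*r^3 - 15*a^5*r^4 + 5*a^5*r^5 - (5/8)*a^5*r^6)"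
    using poly_small[of a r] assms by (intro mult_nonneg_nonneg) auto
  hence "2*a^3 \<le> Y * Den" using iden by linarith
  hence A: "2*a^3 / Den \<le> Y" using Den0 by (simp add: field_simps)
  have B: "a * (2*a^2 / Den) = 2*a^3/Den" using Den0 by (simp add: field_simps power3_eq_cube power2_eq_square)
  have "a * (2*a^2 / Den) \<le> Y" using A B by linarith
  moreover have "a * exp (- (w/a)) \<le> a * (2*a^2 / Den)" using e2 e2' assms by (intro mult_left_mono) auto
  moreover have "(1-a) * exp x \<le> (1-a) * (1 + x + 5/8*x^2)" using e1 assms by (intro mult_left_mono) auto
  ultimately have "a * exp (- (w/a)) + (1-a) * exp x \<le> 1" unfolding Y_def by linarith
  thus ?thesis unfolding w_def x_def by simp
qed

lemma polyN: fixes u r :: real assumes "0 \<le> u" "u \<le> 2/3" "0 \<le> r" "r \<le> 1"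
  shows "0 \<le> u*(1 - 4*r + 2*(1+u)*r^3) + 2*(1 + u - u^2)*r^2"
proof -
  define Q where "Q = 1 - u - u^2 + u*r + u^2*r"
  have id: "u*(1 - 4*r + 2*(1+u)*r^3) + 2*(1 + u - u^2)*r^2 = u*(1-2*r)^2 + 2*r^2*Q"
    unfolding Q_def by algebra
  have "u * u \<le> 2/3*u" using assms by (intro mult_right_mono) auto
  hence uu: "u^2 \<le> 2/3*u" by (simp add: power2_eq_square)
  show ?thesis
  proof (cases "1/5 \<le> r")
    case True
    have "(u + u^2)*(1-r) \<le> (10/9)*(4/5)"
      using assms True uu by (intro mult_mono) auto
    hence "0 \<le> Q" unfolding Q_def by (simp add: algebra_simps)
    hence "0 \<le> u*(1-2*r)^2 + 2*r^2*Q" using assms by simp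
    thus ?thesis using id by simp
  next
    case False
    have "3/5 \<le> 1 - 2*r" using False by simp
    hence "(3/5)^2 \<le> (1-2*r)^2" by (intro power_mono) auto
    hence A: "u*(9/25) \<le> u*(1-2*r)^2" using assms by (intro mult_left_mono) (auto simp: power2_eq_square)
    have "r * r \<le> (1/5) * (1/5)" using False assms by (intro mult_mono) auto
    hence r2: "r^2 \<le> 1/25" by (simp add: power2_eq_square)
    have "0 \<le> u*r + u^2*r" using assms by simp
    hence Q1: "-(5/3)*u \<le> Q" unfolding Q_def using uu assms by linarith
    have "2*r^2*(-(5/3)*u) \<le> 2*r^2*Q" using Q1 by (intro mult_left_mono) auto
    moreover have "-(2/25)*(5/3)*u \<le> 2*r^2*(-(5/3)*u)"
    proof -
      have "r^2 * u \<le> (1/25) * u" using r2 assms by (intro mult_right_mono) auto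
      thus ?thesis by (simp add: algebra_simps)
    qed
    ultimately have "0 \<le> u*(1-2*r)^2 + 2*r^2*Q" using A assms by linarith
    thus ?thesis using id by simp
  qed
qed
lemma A_nonneg: fixes a r :: real
  assumes a: "3/8 \<le> a" "a \<le> 1/2" and r: "0 \<le> r" "r < 1"
  shows "2*r + ((1-2*a)/a)*r^2 \<le> ln (1 + ((1-a)/a)*r) - ln (1-r)"
proof -
  define u where "u = (1-2*a)/a"
  define l where "l = (1-a)/a"
  have a0: "0 < a" using a by simp
  have lu: "l = 1 + u" unfolding l_def u_def using a0 by (simp add: field_simps)
  have u0: "0 \<le> u" unfolding u_def using a by simp
  have u1: "u \<le> 2/3" unfolding u_def using a a0 by (simp add: field_simps)
  define A where "A t = ln (1 + l*t) - ln (1-t) - 2*t - u*t^2" for t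
  have "A 0 \<le> A r"
  proof (rule DERIV_nonneg_imp_nondecreasing[OF r(1)])
    fix t assume t: "0 \<le> t" "t \<le> r"
    have t1: "t < 1" using t r by simp
    have p1: "0 < 1 + l*t" using t u0 lu by (simp add: add_pos_nonneg)
    have p2: "0 < 1 - t" using t1 by simp
    have d1: "DERIV (\<lambda>t. ln (1 + l*t)) t :> l/(1+l*t)"
      using p1 by (auto intro!: derivative_eq_intros)
    have d2: "DERIV (\<lambda>t. ln (1 - t)) t :> -1/(1-t)"
      using p2 by (auto intro!: derivative_eq_intros)
    have d3: "DERIV (\<lambda>t. 2*t + u*t^2) t :> 2 + 2*u*t"
      by (auto intro!: derivative_eq_intros)
    have "DERIV (\<lambda>t. ln (1 + l*t) - ln (1 - t) - (2*t + u*t^2)) t :> l/(1+l*t) - (-1/(1-t)) - (2 + 2*u*t)"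
      by (intro DERIV_diff d1 d2 d3)
    moreover have "A = (\<lambda>t. ln (1 + l*t) - ln (1 - t) - (2*t + u*t^2))"
      unfolding A_def by (auto simp: fun_eq_iff)
    moreover have "l/(1+l*t) - (-1/(1-t)) - (2 + 2*u*t) = l/(1+l*t) + 1/(1-t) - (2 + 2*u*t)" by simp
    ultimately have D: "DERIV A t :> l/(1+l*t) + 1/(1-t) - (2 + 2*u*t)" by simp
    define V where "V = l/(1+l*t) + 1/(1-t) - (2 + 2*u*t)"
    have e: "V * ((1+l*t)*(1-t)) = l*(1-t) + (1+l*t) - (2+2*u*t)*(1+l*t)*(1-t)"
    proof -
      have n1: "1 + l*t \<noteq> 0" and n2: "1 - t \<noteq> 0" using p1 p2 by auto
      define Dn where "Dn = (1+l*t)*(1-t)"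
      have f1: "l/(1+l*t) * Dn = l*(1-t)" using n1 unfolding Dn_def by simp
      have f2: "1/(1-t) * Dn = 1+l*t" using n2 unfolding Dn_def by simp
      have "V * Dn = l/(1+l*t) * Dn + 1/(1-t) * Dn - (2+2*u*t) * Dn"
        unfolding V_def by (simp only: left_diff_distrib distrib_right)
      also have "\<dots> = l*(1-t) + (1+l*t) - (2+2*u*t) * Dn"
        by (simp only: f1 f2)
      finally show ?thesis unfolding Dn_def by (simp only: mult.assoc)
    qed
    have e2: "l*(1-t) + (1+l*t) - (2+2*u*t)*(1+l*t)*(1-t) = u*(1 - 4*t + 2*(1+u)*t^3) + 2*(1 + u - u^2)*t^2"
      unfolding lu by algebra
    have "0 \<le> V * ((1+l*t)*(1-t))" using e e2 polyN[OF u0 u1 t(1)] t1 by simp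
    moreover have "0 < (1+l*t)*(1-t)" using p1 p2 by simp
    ultimately have "0 \<le> V" by (simp add: zero_le_mult_iff)
    hence "0 \<le> l/(1+l*t) + 1/(1-t) - (2 + 2*u*t)" unfolding V_def .
    thus "\<exists>y. DERIV A t :> y \<and> 0 \<le> y" using D by auto
  qed
  moreover have "A 0 = 0" unfolding A_def by simp
  ultimately show ?thesis unfolding A_def u_def[symmetric] l_def[symmetric] by simp
qed

lemma core_large: fixes a r :: real
  assumes a: "3/8 \<le> a" "a \<le> 1/2" and r: "0 \<le> r" "r \<le> 1"
  shows "a * exp (- ((1-a)*r*((1-a)*r + 2*a)/a)) + (1-a) * exp (a*r*(2-r)) \<le> 1"
proof -
  have a0: "0 < a" using a by simp
  define F where "F t = a * exp (- ((1-a)*t*((1-a)*t + 2*a)/a)) + (1-a) * exp (a*t*(2-t))" for t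
  have "F r \<le> F 0"
  proof (rule DERIV_nonpos_imp_nonincreasing[OF r(1)])
    fix t assume t: "0 \<le> t" "t \<le> r"
    define z where "z = (1-a)*t*((1-a)*t + 2*a)/a"
    define y where "y = a*t*(2-t)"
    have dz: "DERIV (\<lambda>t. - ((1-a)*t*((1-a)*t + 2*a)/a)) t :> - (2*(1-a)*((1-a)*t + a)/a)"
      using a0 by (auto intro!: derivative_eq_intros simp: field_simps)
    have dy: "DERIV (\<lambda>t. a*t*(2-t)) t :> 2*a*(1-t)"
      by (auto intro!: derivative_eq_intros simp: algebra_simps)
    have D: "DERIV F t :> a * (exp (-z) * - (2*(1-a)*((1-a)*t + a)/a)) + (1-a) * (exp y * (2*a*(1-t)))"
      unfolding F_def[abs_def] z_def y_def
      by (intro DERIV_add DERIV_cmult DERIV_chain2[OF DERIV_exp] dz dy)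
    have val: "a * (exp (-z) * - (2*(1-a)*((1-a)*t + a)/a)) + (1-a) * (exp y * (2*a*(1-t)))
       = 2*(1-a) * (a*(1-t)*exp y - ((1-a)*t + a)*exp (-z))"
      using a0 by (simp add: field_simps)
    have key: "a*(1-t)*exp y \<le> ((1-a)*t + a)*exp (-z)"
    proof (cases "t = 1")
      case True thus ?thesis using a by simp
    next
      case False
      hence t1: "t < 1" using t r by simp
      have A: "2*t + ((1-2*a)/a)*t^2 \<le> ln (1 + ((1-a)/a)*t) - ln (1-t)"
        by (rule A_nonneg[OF a t(1) t1])
      have yz: "y + z = 2*t + ((1-2*a)/a)*t^2"
        unfolding y_def z_def using a0 by (simp add: field_simps power2_eq_square)
      have p1: "0 < 1 + ((1-a)/a)*t" using a0 a t by (simp add: add_pos_nonneg)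
      have "ln (1-t) + (y + z) \<le> ln (1 + ((1-a)/a)*t)" using A yz by linarith
      hence "exp (ln (1-t) + (y + z)) \<le> exp (ln (1 + ((1-a)/a)*t))" by simp
      hence "(1-t) * exp (y + z) \<le> 1 + ((1-a)/a)*t" using t1 p1 by (simp add: exp_add)
      hence "a * ((1-t) * exp (y + z)) \<le> a * (1 + ((1-a)/a)*t)" using a0 by simp
      moreover have "a * (1 + ((1-a)/a)*t) = (1-a)*t + a" using a0 by (simp add: field_simps)
      moreover have "a * ((1-t) * exp (y + z)) = a*(1-t)*exp y * exp z" by (simp add: exp_add mult.assoc)
      ultimately have "a*(1-t)*exp y * exp z \<le> (1-a)*t + a" by linarith
      hence "a*(1-t)*exp y * exp z * exp (-z) \<le> ((1-a)*t + a) * exp (-z)"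
        by (intro mult_right_mono) auto
      moreover have "a*(1-t)*exp y * exp z * exp (-z) = a*(1-t)*exp y"
        by (simp add: mult.assoc flip: exp_add)
      ultimately show ?thesis by simp
    qed
    have "2*(1-a) * (a*(1-t)*exp y - ((1-a)*t + a)*exp (-z)) \<le> 0"
      using key a by (intro mult_nonneg_nonpos) auto
    thus "\<exists>y. DERIV F t :> y \<and> y \<le> 0" using D val by auto
  qed
  moreover have "F 0 = 1" unfolding F_def by simp
  ultimately show ?thesis unfolding F_def by simp
qed

lemma core: fixes a r :: real assumes "0 < a" "a \<le> 1/2" "0 \<le> r" "r \<le> 1"
  shows "a * exp (- ((1-a)*r*((1-a)*r + 2*a)/a)) + (1-a) * exp (a*r*(2-r)) \<le> 1"
proof (cases "a \<le> 3/8")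
  case True thus ?thesis using core_small assms by blast
next
  case False thus ?thesis using core_large[of a r] assms by simp
qed

definition GG :: "real \<Rightarrow> real \<Rightarrow> real" where
  "GG a x = (if x \<le> 2*a then gg a x else exp a)"
definition ph :: "real \<Rightarrow> real \<Rightarrow> real" where
  "ph a x = 1 + x - GG a x"
definition sg :: "real \<Rightarrow> real \<Rightarrow> real" where
  "sg a x = (if x \<le> 2*a then 1 - (1 - x/(2*a)) * gg a x else 1)"

lemma ph_0: "0 < a \<Longrightarrow> ph a 0 = 0"
  unfolding ph_def GG_def by (simp add: gg_0)

lemma GG_le: "0 < a \<Longrightarrow> GG a x \<le> exp a"
  unfolding GG_def using gg_le by auto

lemma h_ge_ph: "0 < a \<Longrightarrow> ph a c \<le> 1 + c - gg a c"
  unfolding ph_def GG_def using gg_le[of a c] by auto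

lemma ph_tan: assumes "0 < a" "a \<le> 1/2" "0 \<le> x" "0 \<le> c"
  shows "ph a x + sg a x * (c - x) \<le> ph a c"
proof (cases "x \<le> 2*a")
  case False
  hence "ph a x + sg a x * (c - x) = 1 + c - exp a" unfolding ph_def GG_def sg_def by simp
  thus ?thesis unfolding ph_def using GG_le[OF assms(1), of c] by simp
next
  case True
  have gx: "gg a x + (1 - x/(2*a)) * gg a x * (c - x) = 1 + c - (ph a x + sg a x * (c - x))"
    unfolding ph_def GG_def sg_def using True by (simp add: algebra_simps)
  show ?thesis
  proof (cases "c \<le> 2*a")
    case True
    have "gg a c \<le> gg a x + (1 - x/(2*a)) * gg a x * (c - x)"
      by (rule gg_tan) (use assms True \<open>x \<le> 2*a\<close> in auto)
    thus ?thesis using gx True unfolding ph_def GG_def by simp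
  next
    case False
    have t2: "gg a (2*a) \<le> gg a x + (1 - x/(2*a)) * gg a x * (2*a - x)"
      by (rule gg_tan) (use assms \<open>x \<le> 2*a\<close> in auto)
    have "0 \<le> (1 - x/(2*a)) * gg a x" using \<open>x \<le> 2*a\<close> assms
      by (intro mult_nonneg_nonneg) (auto simp: gg_def field_simps)
    hence "(1 - x/(2*a)) * gg a x * (2*a - x) \<le> (1 - x/(2*a)) * gg a x * (c - x)"
      using False by (intro mult_left_mono) auto
    hence "exp a \<le> gg a x + (1 - x/(2*a)) * gg a x * (c - x)"
      using t2 gg_2a[OF assms(1)] by simp
    thus ?thesis using gx False unfolding ph_def GG_def by simp
  qed
qed

lemma ph_ratio: assumes "0 < a" "a \<le> 1/2" "0 < x1" "x1 \<le> x0"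
  shows "ph a x1 * x0 \<le> ph a x0 * x1"
proof -
  have h1: "ph a x1 + sg a x1 * (0 - x1) \<le> 0"
    using ph_tan[of a x1 0] ph_0 assms by auto
  have h2: "ph a x1 + sg a x1 * (x0 - x1) \<le> ph a x0"
    using ph_tan[of a x1 x0] assms by auto
  have "ph a x1 * (x0 - x1) \<le> (sg a x1 * x1) * (x0 - x1)"
    using h1 assms by (intro mult_right_mono) auto
  moreover have "x1 * (ph a x1 + sg a x1 * (x0 - x1)) \<le> x1 * ph a x0"
    using h2 assms by (intro mult_left_mono) auto
  ultimately have "ph a x1 * x1 + ph a x1 * (x0 - x1) \<le> x1 * ph a x0"
    by (simp add: algebra_simps)
  thus ?thesis by (simp add: algebra_simps)
qed

lemma TP: assumes "0 < a" "a \<le> 1/2" "0 < t"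
  shows "a * gg a (-t) + (1-a) * GG a (a*t/(1-a)) \<le> 1"
proof -
  define r where "r = t/(2*(1-a))"
  have a1: "0 < 1 - a" using assms by simp
  have tr: "t = 2*(1-a)*r" unfolding r_def using a1 by simp
  have r0: "0 \<le> r" unfolding r_def using assms a1 by simp
  have gneg: "gg a (-s) = exp (- ((1-a)*q*((1-a)*q + 2*a)/a))" if "s = 2*(1-a)*q" for s q
    unfolding gg_def that using assms by (simp add: field_simps power2_eq_square)
  have x1: "a*t/(1-a) = 2*a*r" unfolding tr using a1 by (simp add: field_simps)
  show ?thesis
  proof (cases "r \<le> 1")
    case True
    have "GG a (a*t/(1-a)) = exp (a*r*(2-r))"
      unfolding x1 GG_def gg_def using True assms r0
      by (auto simp: field_simps power2_eq_square mult_left_le)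
    thus ?thesis using core[OF assms(1,2) r0 True] gneg[OF tr] by simp
  next
    case False
    have "GG a (a*t/(1-a)) = exp a"
      unfolding x1 GG_def using False assms by auto
    moreover have "gg a (-t) \<le> gg a (- (2*(1-a)))"
    proof -
      have "2*(1-a) \<le> t" using False tr a1 by (simp add: mult_le_cancel_left1)
      hence "(2*(1-a))^2 \<le> t^2" using a1 by (intro power_mono) auto
      hence "(2*(1-a))^2/(4*a) \<le> t^2/(4*a)" using assms by (intro divide_right_mono) auto
      hence "-t - (-t)^2/(4*a) \<le> -(2*(1-a)) - (-(2*(1-a)))^2/(4*a)"
        using \<open>2*(1-a) \<le> t\<close> by (simp only: power2_minus)
      thus ?thesis unfolding gg_def by simp
    qed
    moreover have "a * gg a (- (2*(1-a))) + (1-a) * exp a \<le> 1"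
      using core[OF assms(1,2), of 1] gneg[of "2*(1-a)" 1] by simp
    ultimately show ?thesis using assms by (smt (verit) mult_left_mono)
  qed
qed

lemma neg_bound: assumes a: "0 < a" "a \<le> 1/2" and t: "0 < t" and pp: "a \<le> p" and ptM: "p * t \<le> M"
  shows "gg a (-t) \<le> 1 - t + t * (ph a (M/(1-a)) / (M/(1-a)))"
proof -
  have a1: "0 < 1 - a" using a by simp
  define x1 where "x1 = a*t/(1-a)"
  define x0 where "x0 = M/(1-a)"
  have x1p: "0 < x1" unfolding x1_def using a a1 t by simp
  have "a * t \<le> p * t" using pp t by (intro mult_right_mono) auto
  hence "a * t \<le> M" using ptM by simp
  hence x10: "x1 \<le> x0" unfolding x1_def x0_def using a1 by (simp add: divide_right_mono)
  have x0p: "0 < x0" using x1p x10 by simp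
  have tp: "a * gg a (-t) + (1-a) * GG a x1 \<le> 1" unfolding x1_def by (rule TP[OF a t])
  have "(1-a) * x1 = a * t" unfolding x1_def using a1 by simp
  hence "a * (gg a (-t) - 1 + t) \<le> (1-a) * ph a x1" using tp unfolding ph_def by (simp add: algebra_simps)
  hence E1: "gg a (-t) - 1 + t \<le> (1-a) * ph a x1 / a" using a by (simp add: field_simps)
  have "(1-a) * ph a x1 / a = t * (ph a x1 / x1)" unfolding x1_def using a a1 t by (simp add: field_simps)
  also have "\<dots> \<le> t * (ph a x0 / x0)"
  proof -
    have "ph a x1 * x0 \<le> ph a x0 * x1" by (rule ph_ratio[OF a x1p x10])
    hence "ph a x1 / x1 \<le> ph a x0 / x0" using x1p x0p by (simp add: field_simps)
    thus ?thesis using t by (intro mult_left_mono) auto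
  qed
  finally show ?thesis using E1 unfolding x0_def by simp
qed

lemma pos_bound: assumes a: "0 < a" "a \<le> 1/2" and c: "0 \<le> c" and x0: "0 \<le> x0"
  shows "gg a c \<le> 1 + c - (ph a x0 + sg a x0 * (c - x0))"
  using ph_tan[OF a x0 c] h_ge_ph[OF a(1), of c] by simp

theorem lemma3p1:
  fixes \<alpha> :: real and m :: nat and p c :: "nat \<Rightarrow> real"
  assumes "0 < \<alpha>" and "\<alpha> \<le> 1/2"
    and "\<And>j. j < m \<Longrightarrow> p j \<ge> \<alpha>"
    and "(\<Sum>j<m. p j) = 1"
    and "(\<Sum>j<m. p j * c j) = 0"
  shows "(\<Sum>j<m. p j * exp (c j - (c j)\<^sup>2 / (4 * \<alpha>))) \<le> 1"
proof -
  note a = assms(1,2)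
  have a1: "0 < 1 - \<alpha>" using a by simp
  have pp: "\<And>j. j < m \<Longrightarrow> 0 < p j" using assms(1,3) by (meson less_le_trans)
  have goal_eq: "(\<Sum>j<m. p j * exp (c j - (c j)\<^sup>2 / (4 * \<alpha>))) = (\<Sum>j<m. p j * gg \<alpha> (c j))"
    unfolding gg_def by simp
  define M where "M = (\<Sum>j<m. if 0 \<le> c j then p j * c j else 0)"
  define Mn where "Mn = (\<Sum>j<m. if 0 \<le> c j then 0 else p j * (- c j))"
  define Pp where "Pp = (\<Sum>j<m. if 0 \<le> c j then p j else 0)"
  define Pn where "Pn = (\<Sum>j<m. if 0 \<le> c j then 0 else p j)"
  have "M - Mn = (\<Sum>j<m. p j * c j)" unfolding M_def Mn_def
    by (simp add: sum_subtractf[symmetric]) (rule sum.cong, auto)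
  hence MMn: "Mn = M" using assms(5) by simp
  have "Pp + Pn = (\<Sum>j<m. p j)" unfolding Pp_def Pn_def
    by (simp add: sum.distrib[symmetric]) (rule sum.cong, auto)
  hence PP: "Pp + Pn = 1" using assms(4) by simp
  have nng: "0 \<le> (if 0 \<le> c x then 0 else p x * (- c x))" if "x \<in> {..<m}" for x
    using pp[of x] that by (simp add: mult_pos_neg less_imp_le)
  have M0: "0 \<le> M" unfolding M_def using pp by (intro sum_nonneg) (simp add: less_imp_le)
  show ?thesis
  proof (cases "M = 0")
    case True
    have nn1: "0 \<le> (if 0 \<le> c x then 0 else p x * (- c x))" if "x \<in> {..<m}" for x
      using pp[of x] that by (simp add: mult_pos_neg less_imp_le)
    have Z: "\<forall>j\<in>{..<m}. (if 0 \<le> c j then 0 else p j * (- c j)) = 0"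
      using sum_nonneg_eq_0_iff[OF finite_lessThan nn1] MMn True unfolding Mn_def by simp
    have n0: "0 \<le> c j" if j: "j < m" for j
    proof (rule ccontr)
      assume cj: "\<not> 0 \<le> c j"
      have "0 < (if 0 \<le> c j then 0 else p j * (- c j))" using pp[OF j] cj by (simp add: mult_pos_neg)
      moreover have "(if 0 \<le> c j then 0 else p j * (- c j)) = 0" using Z j by blast
      ultimately show False by linarith
    qed
    have nn2: "0 \<le> (if 0 \<le> c x then p x * c x else 0)" if "x \<in> {..<m}" for x
      using pp[of x] that by simp
    have "\<forall>j\<in>{..<m}. (if 0 \<le> c j then p j * c j else 0) = 0"
      using sum_nonneg_eq_0_iff[OF finite_lessThan nn2] True unfolding M_def by simp
    hence "\<And>j. j < m \<Longrightarrow> c j = 0" using n0 pp by (fastforce split: if_splits)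
    hence "(\<Sum>j<m. p j * gg \<alpha> (c j)) = (\<Sum>j<m. p j)" by (simp add: gg_0)
    thus ?thesis using goal_eq assms(4) by simp
  next
    case False
    hence Mp: "0 < M" using M0 by simp
    define x0 where "x0 = M/(1-\<alpha>)"
    have x0p: "0 < x0" unfolding x0_def using Mp a1 by simp
    define K where "K = ph \<alpha> x0 / x0"
    define s0 where "s0 = sg \<alpha> x0"
    define B where "B j = p j * (1 + c j) + (if 0 \<le> c j then p j * (s0 * x0 - ph \<alpha> x0) - s0 * (p j * c j) else K * (p j * (- c j)))" for j
    have bound: "p j * gg \<alpha> (c j) \<le> B j" if j: "j < m" for j
    proof (cases "0 \<le> c j")
      case True
      have "gg \<alpha> (c j) \<le> 1 + c j - (ph \<alpha> x0 + s0 * (c j - x0))"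
        unfolding s0_def by (rule pos_bound[OF a True]) (use x0p in simp)
      hence "p j * gg \<alpha> (c j) \<le> p j * (1 + c j - (ph \<alpha> x0 + s0 * (c j - x0)))"
        using pp[OF j] by (intro mult_left_mono) auto
      thus ?thesis unfolding B_def using True by (simp add: algebra_simps)
    next
      case False
      have le: "p j * (- c j) \<le> M"
      proof -
        have "(if 0 \<le> c j then 0 else p j * (- c j)) \<le> Mn" unfolding Mn_def
          by (rule member_le_sum[of j "{..<m}" "\<lambda>j. if 0 \<le> c j then 0 else p j * (- c j)"])
             (use j nng in auto)
        thus ?thesis using False MMn by simp
      qed
      have "gg \<alpha> (- (- c j)) \<le> 1 - (- c j) + (- c j) * (ph \<alpha> (M/(1-\<alpha>)) / (M/(1-\<alpha>)))"
        by (rule neg_bound[OF a _ assms(3)[OF j] le]) (use False in simp)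
      hence "gg \<alpha> (c j) \<le> 1 + c j + K * (- c j)" unfolding K_def x0_def by (simp add: algebra_simps)
      hence "p j * gg \<alpha> (c j) \<le> p j * (1 + c j + K * (- c j))"
        using pp[OF j] by (intro mult_left_mono) auto
      thus ?thesis unfolding B_def using False by (simp add: algebra_simps)
    qed
    have sumB: "(\<Sum>j<m. B j) = (\<Sum>j<m. p j) + (\<Sum>j<m. p j * c j) + (s0 * x0 - ph \<alpha> x0) * Pp - s0 * M + K * Mn"
    proof -
      have "(\<Sum>j<m. B j) = (\<Sum>j<m. p j + p j * c j) + (\<Sum>j<m. (s0 * x0 - ph \<alpha> x0) * (if 0 \<le> c j then p j else 0)
            - s0 * (if 0 \<le> c j then p j * c j else 0) + K * (if 0 \<le> c j then 0 else p j * (- c j)))"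
        unfolding B_def by (simp add: sum.distrib[symmetric] algebra_simps) (rule sum.cong, auto simp: algebra_simps)
      also have "\<dots> = (\<Sum>j<m. p j) + (\<Sum>j<m. p j * c j) + (s0 * x0 - ph \<alpha> x0) * Pp - s0 * M + K * Mn"
        unfolding Pp_def M_def Mn_def by (simp add: sum.distrib sum_subtractf sum_distrib_left)
      finally show ?thesis .
    qed
    have negex: "\<exists>j<m. c j < 0"
    proof (rule ccontr)
      assume "\<not> (\<exists>j<m. c j < 0)"
      hence "Mn = 0" unfolding Mn_def by (auto intro!: sum.neutral)
      thus False using MMn Mp by simp
    qed
    then obtain j0 where j0: "j0 < m" "c j0 < 0" by blast
    have "(if 0 \<le> c j0 then 0 else p j0) \<le> Pn" unfolding Pn_def
      by (rule member_le_sum) (use j0 pp in \<open>auto simp: less_imp_le\<close>)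
    hence "\<alpha> \<le> Pn" using j0 assms(3)[OF j0(1)] by simp
    hence Ppl: "Pp \<le> 1 - \<alpha>" using PP by simp
    have tan0: "ph \<alpha> x0 + s0 * (0 - x0) \<le> 0"
      unfolding s0_def using ph_tan[OF a, of x0 0] x0p ph_0[OF a(1)] by simp
    have F1: "(s0 * x0 - ph \<alpha> x0) * Pp \<le> (s0 * x0 - ph \<alpha> x0) * (1 - \<alpha>)"
      using tan0 Ppl by (intro mult_left_mono) auto
    have F2: "K * Mn = (1-\<alpha>) * ph \<alpha> x0" unfolding K_def MMn x0_def using a1 Mp by (simp add: field_simps)
    have F3: "s0 * M = (s0 * x0) * (1 - \<alpha>)" unfolding x0_def using a1 by simp
    have "(\<Sum>j<m. B j) = 1 + (s0 * x0 - ph \<alpha> x0) * Pp - s0 * M + K * Mn"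
      using sumB assms(4,5) by simp
    also have "\<dots> = 1 + (s0 * x0 - ph \<alpha> x0) * Pp - (s0 * x0 - ph \<alpha> x0) * (1 - \<alpha>)"
      unfolding F2 F3 by (simp add: algebra_simps)
    also have "\<dots> \<le> 1" using F1 by simp
    finally have "(\<Sum>j<m. B j) \<le> 1" .
    moreover have "(\<Sum>j<m. p j * gg \<alpha> (c j)) \<le> (\<Sum>j<m. B j)" by (rule sum_mono) (use bound in simp)
    ultimately show ?thesis using goal_eq by simp
  qed
qed

end
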